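(* Let $G$ be a graph with at least one vertex and maximum degree $\Delta$, and let $\lambda,\beta,\gamma>0$ be such that the hard-core model on $G$ at fugacity $\lambda$ has local $(\beta,\gamma)$-occupancy. Then \[ \frac{1}{|V(G)|}\,\frac{\lambda Z_G'(\lambda)}{Z_G(\lambda)}\ \ge\ \frac{1}{\beta+\gamma\Delta}, \qquad\text{and in particular}\qquad \alpha(G)\ \ge\ \frac{|V(G)|}{\beta+\gamma\Delta}. \]
   Context: All graphs are finite and simple. For a graph $G$, $\mathcal I(G)$ denotes the set of independent sets of $G$ (including $\varnothing$), $\alpha(G)$ the maximum size of an independent set, and $Z_G(\lambda)=\sum_{I\in\mathcal I(G)}\lambda^{|I|}$ the partition function (independence polynomial), with $Z_G'$ its derivative in $\lambda$. The hard-core model on $G$ at fugacity $\lambda>0$ is the probability distribution on $\mathcal I(G)$ with $\Pr(\mathbf I=I)=\lambda^{|I|}/Z_G(\lambda)$; note $\mathbb E|\mathbf I|=\lambda Z_G'(\lambda)/Z_G(\lambda)$. $N(u)$ is the neighbourhood of $u$ and $G[N(u)]$ the subgraph it induces. Given $\lambda>0$ and positive reals $(\beta_u,\gamma_u)$ for $u\in V(G)$, the hard-core model on $G$ at fugacity $\lambda$ has local $(\beta_u,\gamma_u)_u$-occupancy if for every $u\in V(G)$ and every induced subgraph $F$ of $G[N(u)]$ (including the graph with no vertices, for which $Z_F=1$, $Z_F'=0$), \[\beta_u\frac{\lambda}{1+\lambda}\frac{1}{Z_F(\lambda)}+\gamma_u\frac{\lambda Z_F'(\lambda)}{Z_F(\lambda)}\ge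 1.\] Local $(\beta,\gamma)$-occupancy means local $(\beta_u,\gamma_u)_u$-occupancy with $\beta_u=\beta,\gamma_u=\gamma$ for all $u$. *)

theory Defs
  imports "HOL-Analysis.Analysis"
begin

definition simple_graph :: "'a set \<Rightarrow> ('a \<Rightarrow> 'a \<Rightarrow> bool) \<Rightarrow> bool" where
  "simple_graph V E \<longleftrightarrow> finite V \<and> (\<forall>x y. E x y \<longrightarrow> x \<in> V \<and> y \<in> V)
     \<and> (\<forall>x y. E x y \<longrightarrow> E y x) \<and> (\<forall>x. \<not> E x x)"

definition neighbourhood :: "'a set \<Rightarrow> ('a \<Rightarrow> 'a \<Rightarrow> bool) \<Rightarrow> 'a \<Rightarrow> 'a set" where
  "neighbourhood V E u = {v \<in> V. E u v}"

definition degree :: "'a set \<Rightarrow> ('a \<Rightarrow> 'a \<Rightarrow> bool) \<Rightarrow> 'a \<Rightarrow> nat" where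
  "degree V E u = card (neighbourhood V E u)"

definition max_degree :: "'a set \<Rightarrow> ('a \<Rightarrow> 'a \<Rightarrow> bool) \<Rightarrow> nat" where
  "max_degree V E = Max (degree V E ` V)"

definition indep_sets :: "'a set \<Rightarrow> ('a \<Rightarrow> 'a \<Rightarrow> bool) \<Rightarrow> 'a set set" where
  "indep_sets V E = {I. I \<subseteq> V \<and> (\<forall>x\<in>I. \<forall>y\<in>I. \<not> E x y)}"

definition indep_number :: "'a set \<Rightarrow> ('a \<Rightarrow> 'a \<Rightarrow> bool) \<Rightarrow> nat" where
  "indep_number V E = Max (card ` indep_sets V E)"

definition Z :: "'a set \<Rightarrow> ('a \<Rightarrow> 'a \<Rightarrow> bool) \<Rightarrow> real \<Rightarrow> real" where
  "Z V E lam = (\<Sum>I\<in>indep_sets V E. lam ^ card I)"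

definition Z' :: "'a set \<Rightarrow> ('a \<Rightarrow> 'a \<Rightarrow> bool) \<Rightarrow> real \<Rightarrow> real" where
  "Z' V E lam = (\<Sum>I\<in>indep_sets V E. real (card I) * lam ^ (card I - 1))"

definition induced_edges :: "('a \<Rightarrow> 'a \<Rightarrow> bool) \<Rightarrow> 'a set \<Rightarrow> 'a \<Rightarrow> 'a \<Rightarrow> bool" where
  "induced_edges E S = (\<lambda>x y. x \<in> S \<and> y \<in> S \<and> E x y)"

text \<open>Local (beta_u, gamma_u)_u-occupancy: for every vertex u and every induced
  subgraph F of G[N(u)] (i.e. F = G[S] for S \<subseteq> N(u), including S empty).\<close>
definition local_occupancy ::
  "'a set \<Rightarrow> ('a \<Rightarrow> 'a \<Rightarrow> bool) \<Rightarrow> real \<Rightarrow> ('a \<Rightarrow> real) \<Rightarrow> ('a \<Rightarrow> real) \<Rightarrow> bool" where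
  "local_occupancy V E lam \<beta> \<gamma> \<longleftrightarrow>
     (\<forall>u\<in>V. \<forall>S. S \<subseteq> neighbourhood V E u \<longrightarrow>
        \<beta> u * (lam / (1 + lam)) * (1 / Z S (induced_edges E S) lam)
        + \<gamma> u * (lam * Z' S (induced_edges E S) lam / Z S (induced_edges E S) lam) \<ge> 1)"

end

theory Submission
  imports Defs
begin

definition SJ :: "'a set \<Rightarrow> ('a \<Rightarrow> 'a \<Rightarrow> bool) \<Rightarrow> 'a \<Rightarrow> 'a set \<Rightarrow> 'a set" where
  "SJ V E u J = {v \<in> neighbourhood V E u. \<forall>j\<in>J. \<not> E v j}"

lemma fin_indep: "finite V \<Longrightarrow> finite (indep_sets V E)"
  unfolding indep_sets_def by (rule finite_subset[of _ "Pow V"]) auto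

lemma decomp:
  assumes sg: "simple_graph V E" and u: "u \<in> V"
  shows "(\<Sum>I\<in>indep_sets V E. h I) =
    (\<Sum>J\<in>{J\<in>indep_sets V E. J \<inter> insert u (neighbourhood V E u) = {}}.
        h (insert u J) + (\<Sum>K\<in>indep_sets (SJ V E u J) (induced_edges E (SJ V E u J)). h (J \<union> K)))"
proof -
  let ?N = "neighbourhood V E u"
  let ?T = "{J\<in>indep_sets V E. J \<inter> insert u ?N = {}}"
  have fV: "finite V" using sg unfolding simple_graph_def by auto
  have symE: "\<And>x y. E x y \<Longrightarrow> E y x" and irr: "\<And>x. \<not> E x x"
    and inV: "\<And>x y. E x y \<Longrightarrow> x \<in> V \<and> y \<in> V"
    using sg unfolding simple_graph_def by auto
  have fI: "finite (indep_sets V E)" using fin_indep fV .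
  have fT: "finite ?T" using fI by auto
  have img: "(\<lambda>I. I - insert u ?N) ` indep_sets V E \<subseteq> ?T"
    unfolding indep_sets_def by auto
  have blk: "(\<Sum>I\<in>{I. I \<in> indep_sets V E \<and> I - insert u ?N = J}. h I) =
     h (insert u J) + (\<Sum>K\<in>indep_sets (SJ V E u J) (induced_edges E (SJ V E u J)). h (J \<union> K))"
    if J: "J \<in> ?T" for J
  proof -
    let ?S = "SJ V E u J"
    let ?K = "indep_sets ?S (induced_edges E ?S)"
    have JV: "J \<subseteq> V" and Jind: "\<forall>x\<in>J. \<forall>y\<in>J. \<not> E x y" and Jd: "J \<inter> insert u ?N = {}"
      using J unfolding indep_sets_def by auto
    have SN: "?S \<subseteq> ?N" unfolding SJ_def by auto
    have uS: "u \<notin> ?S" using irr unfolding SJ_def neighbourhood_def by auto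
    have seteq: "{I. I \<in> indep_sets V E \<and> I - insert u ?N = J} = insert (insert u J) ((\<union>) J ` ?K)"
    proof (rule set_eqI, rule iffI)
      fix I assume "I \<in> {I. I \<in> indep_sets V E \<and> I - insert u ?N = J}"
      hence Iind: "I \<in> indep_sets V E" and IJ: "I - insert u ?N = J" by auto
      show "I \<in> insert (insert u J) ((\<union>) J ` ?K)"
      proof (cases "u \<in> I")
        case True
        have "I \<inter> ?N = {}" using Iind True symE unfolding indep_sets_def neighbourhood_def by blast
        hence "I = insert u J" using IJ True by auto
        thus ?thesis by simp
      next
        case False
        have "I \<inter> ?N \<in> ?K" using Iind IJ symE
          unfolding indep_sets_def SJ_def induced_edges_def by auto
        moreover have "I = J \<union> (I \<inter> ?N)" using IJ False by auto
        ultimately show ?thesis by blast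
      qed
    next
      fix I assume "I \<in> insert (insert u J) ((\<union>) J ` ?K)"
      then consider "I = insert u J" | K where "K \<in> ?K" "I = J \<union> K" by auto
      thus "I \<in> {I. I \<in> indep_sets V E \<and> I - insert u ?N = J}"
      proof cases
        case 1
        then show ?thesis using JV Jind Jd u symE irr unfolding indep_sets_def neighbourhood_def by auto
      next
        case (2 K)
        have KS: "K \<subseteq> ?S" and Kind: "\<forall>x\<in>K. \<forall>y\<in>K. \<not> E x y"
          using 2(1) unfolding indep_sets_def induced_edges_def by auto
        have "K \<subseteq> V" using KS SN unfolding neighbourhood_def by auto
        moreover have "\<forall>x\<in>K. \<forall>j\<in>J. \<not> E x j \<and> \<not> E j x" using KS symE unfolding SJ_def by blast
        moreover have "K \<subseteq> insert u ?N" using KS SN by auto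
        ultimately show ?thesis using 2(2) JV Jind Jd Kind unfolding indep_sets_def by auto
      qed
    qed
    have notin: "insert u J \<notin> (\<union>) J ` ?K"
    proof
      assume "insert u J \<in> (\<union>) J ` ?K"
      then obtain K where "K \<in> ?K" "insert u J = J \<union> K" by auto
      hence "u \<in> K" "K \<subseteq> ?S" using Jd unfolding indep_sets_def by auto
      thus False using uS by auto
    qed
    have inj: "inj_on ((\<union>) J) ?K"
    proof (rule inj_onI)
      fix K1 K2 assume "K1 \<in> ?K" "K2 \<in> ?K" "J \<union> K1 = J \<union> K2"
      moreover have "K1 \<subseteq> ?N" "K2 \<subseteq> ?N" using calculation SN unfolding indep_sets_def by auto
      ultimately show "K1 = K2" using Jd by blast
    qed
    have fK: "finite ?K" by (rule fin_indep) (use SN fV in \<open>auto simp: neighbourhood_def intro: finite_subset\<close>)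
    show ?thesis unfolding seteq
      using fK notin inj by (simp add: sum.reindex)
  qed
  have "(\<Sum>I\<in>indep_sets V E. h I) = (\<Sum>J\<in>?T. \<Sum>I\<in>{I. I \<in> indep_sets V E \<and> I - insert u ?N = J}. h I)"
    using sum.group[OF fI fT img, of h] by simp
  also have "\<dots> = (\<Sum>J\<in>?T. h (insert u J) + (\<Sum>K\<in>indep_sets (SJ V E u J) (induced_edges E (SJ V E u J)). h (J \<union> K)))"
    by (rule sum.cong) (use blk in auto)
  finally show ?thesis .
qed

lemma lamZ': "lam * Z' S E lam = (\<Sum>I\<in>indep_sets S E. real (card I) * lam ^ card I)"
  unfolding Z'_def sum_distrib_left
  by (rule sum.cong) (auto simp: power_eq_if)

lemma empty_indep: "{} \<in> indep_sets S E" unfolding indep_sets_def by auto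

lemma Z_ge1: assumes "finite S" "lam \<ge> 0" shows "Z S E lam \<ge> 1"
proof -
  have "Z S E lam = lam ^ card ({}::'a set) + (\<Sum>I\<in>indep_sets S E - {{}}. lam ^ card I)"
    unfolding Z_def using sum.remove[OF fin_indep[OF assms(1)] empty_indep, of "\<lambda>I. lam ^ card I" E]
    by simp
  moreover have "(\<Sum>I\<in>indep_sets S E - {{}}. lam ^ card I) \<ge> 0" using assms(2) by (intro sum_nonneg) auto
  ultimately show ?thesis by simp
qed

lemma indep_empty_set: "indep_sets {} E = {{}}" unfolding indep_sets_def by auto

lemma mulz: fixes A B c z :: real assumes "z \<ge> 1" "A * (1/z) + B * (c/z) \<ge> 1" shows "A + B * c \<ge> z"
proof -
  have "A * (1/z) + B * (c/z) = (A + B*c) / z" using assms(1) by (simp add: field_simps)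
  thus ?thesis using assms by (simp add: le_divide_eq)
qed

lemma local_u:
  assumes sg: "simple_graph V E" and u: "u \<in> V" and lam: "lam > 0"
    and occ: "\<And>S. S \<subseteq> neighbourhood V E u \<Longrightarrow>
        \<beta> * (lam / (1 + lam)) * (1 / Z S (induced_edges E S) lam)
        + \<gamma> * (lam * Z' S (induced_edges E S) lam / Z S (induced_edges E S) lam) \<ge> 1"
  shows "(\<Sum>I\<in>indep_sets V E. lam ^ card I * (\<beta> * (if u \<in> I then 1 else 0)
            + \<gamma> * real (card (I \<inter> neighbourhood V E u)) - 1)) \<ge> 0"
proof -
  let ?N = "neighbourhood V E u"
  define h where "h I = lam ^ card I * (\<beta> * (if u \<in> I then 1 else 0)
            + \<gamma> * real (card (I \<inter> ?N)) - 1)" for I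
  have fV: "finite V" and irr: "\<And>x. \<not> E x x"
    using sg unfolding simple_graph_def by auto
  have uN: "u \<notin> ?N" using irr unfolding neighbourhood_def by auto
  have b0: "\<beta> * (lam / (1 + lam)) \<ge> 1"
    using occ[of "{}"] by (simp add: Z_def Z'_def indep_empty_set)
  have b1: "\<beta> * lam \<ge> 1 + lam" using b0 lam by (simp add: field_simps)
  have blk: "h (insert u J) + (\<Sum>K\<in>indep_sets (SJ V E u J) (induced_edges E (SJ V E u J)). h (J \<union> K)) \<ge> 0"
    if J: "J \<in> {J\<in>indep_sets V E. J \<inter> insert u ?N = {}}" for J
  proof -
    let ?S = "SJ V E u J"
    let ?K = "indep_sets ?S (induced_edges E ?S)"
    have SN: "?S \<subseteq> ?N" unfolding SJ_def by auto
    have fS: "finite ?S" using SN fV unfolding neighbourhood_def by (auto intro: finite_subset)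
    have JV: "J \<subseteq> V" and Jd: "J \<inter> insert u ?N = {}" using J unfolding indep_sets_def by auto
    have fJ: "finite J" using JV fV by (auto intro: finite_subset)
    have h1: "h (insert u J) = lam ^ card J * (lam * (\<beta> - 1))"
    proof -
      have "insert u J \<inter> ?N = {}" using Jd uN by auto
      moreover have "card (insert u J) = Suc (card J)" using fJ Jd by auto
      ultimately show ?thesis unfolding h_def by simp
    qed
    have h2: "h (J \<union> K) = lam ^ card J * (lam ^ card K * (\<gamma> * real (card K) - 1))" if K: "K \<in> ?K" for K
    proof -
      have KN: "K \<subseteq> ?N" using K SN unfolding indep_sets_def by auto
      have fK: "finite K" using fS K unfolding indep_sets_def by (auto intro: finite_subset)
      have "card (J \<union> K) = card J + card K" using fJ fK KN Jd by (subst card_Un_disjoint) auto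
      moreover have "u \<notin> J \<union> K" using KN uN Jd by auto
      moreover have "(J \<union> K) \<inter> ?N = K" using KN Jd by auto
      ultimately show ?thesis unfolding h_def by (simp add: power_add algebra_simps)
    qed
    let ?z = "Z ?S (induced_edges E ?S) lam" and ?z' = "Z' ?S (induced_edges E ?S) lam"
    have zpos: "?z \<ge> 1" using Z_ge1[OF fS, of lam] lam by simp
    have sK: "(\<Sum>K\<in>?K. lam ^ card K * (\<gamma> * real (card K) - 1)) = \<gamma> * (lam * ?z') - ?z"
      unfolding lamZ' Z_def by (simp add: sum_subtractf sum_distrib_left algebra_simps)
    have o: "\<beta> * (lam / (1 + lam)) * (1 / ?z) + \<gamma> * (lam * ?z' / ?z) \<ge> 1" using occ[OF SN] .
    have o2: "\<beta> * (lam / (1 + lam)) + \<gamma> * (lam * ?z') \<ge> ?z" by (rule mulz[OF zpos o])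
    have "\<beta> * (lam / (1 + lam)) \<le> \<beta> * lam - lam"
    proof -
      have "\<beta> * lam - lam - \<beta> * (lam / (1 + lam)) = lam * (\<beta> * lam - 1 - lam) / (1 + lam)"
        using lam by (simp add: field_simps)
      also have "\<dots> \<ge> 0" using b1 lam by simp
      finally show ?thesis by simp
    qed
    hence "lam * (\<beta> - 1) + (\<gamma> * (lam * ?z') - ?z) \<ge> 0" using o2 by (simp add: algebra_simps)
    hence "lam ^ card J * (lam * (\<beta> - 1) + (\<gamma> * (lam * ?z') - ?z)) \<ge> 0" using lam by simp
    thus ?thesis using h1 h2 sK by (simp add: sum_distrib_left[symmetric] distrib_left)
  qed
  have "(\<Sum>I\<in>indep_sets V E. h I) \<ge> 0"
    unfolding decomp[OF sg u, of h] by (rule sum_nonneg) (use blk in auto)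
  thus ?thesis unfolding h_def .
qed

lemma nbr_count:
  assumes sg: "simple_graph V E" and IV: "I \<subseteq> V"
  shows "(\<Sum>u\<in>V. real (card (I \<inter> neighbourhood V E u))) \<le> real (card I) * real (max_degree V E)"
proof -
  have fV: "finite V" and symE: "\<And>x y. E x y \<Longrightarrow> E y x" and inV: "\<And>x y. E x y \<Longrightarrow> x \<in> V \<and> y \<in> V"
    using sg unfolding simple_graph_def by auto
  have fI: "finite I" using IV fV by (auto intro: finite_subset)
  have "(\<Sum>u\<in>V. real (card (I \<inter> neighbourhood V E u))) = (\<Sum>u\<in>V. \<Sum>v\<in>I. if E u v then 1 else 0)"
  proof (rule sum.cong[OF refl])
    fix u assume "u \<in> V"
    have "I \<inter> neighbourhood V E u = I \<inter> Collect (E u)" using IV unfolding neighbourhood_def by auto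
    thus "real (card (I \<inter> neighbourhood V E u)) = (\<Sum>v\<in>I. if E u v then 1 else 0)"
      using fI by (simp add: sum.If_cases)
  qed
  also have "\<dots> = (\<Sum>v\<in>I. \<Sum>u\<in>V. if E u v then 1 else 0)" by (rule sum.swap)
  also have "\<dots> = (\<Sum>v\<in>I. real (degree V E v))"
  proof (rule sum.cong[OF refl])
    fix v assume "v \<in> I"
    have "V \<inter> {u. E u v} = neighbourhood V E v" using symE unfolding neighbourhood_def by auto
    thus "(\<Sum>u\<in>V. if E u v then 1 else 0) = real (degree V E v)"
      using fV unfolding degree_def by (simp add: sum.If_cases)
  qed
  also have "\<dots> \<le> (\<Sum>v\<in>I. real (max_degree V E))"
  proof (rule sum_mono)
    fix v assume "v \<in> I"
    hence "degree V E v \<le> max_degree V E" using IV fV unfolding max_degree_def by (auto intro: Max_ge)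
    thus "real (degree V E v) \<le> real (max_degree V E)" by simp
  qed
  also have "\<dots> = real (card I) * real (max_degree V E)" by simp
  finally show ?thesis .
qed

lemma c1aux: fixes D n Z W :: real assumes "D > 0" "n > 0" "Z > 0" "n * Z \<le> D * W"
  shows "1 / D \<le> (1 / n) * (W / Z)"
  using assms by (simp add: field_simps)

theorem mainTheorem1:
  fixes V :: "'a set" and E :: "'a \<Rightarrow> 'a \<Rightarrow> bool"
    and lam \<beta> \<gamma> :: real
  assumes "simple_graph V E"
    and "V \<noteq> {}"
    and "lam > 0" and "\<beta> > 0" and "\<gamma> > 0"
    and "local_occupancy V E lam (\<lambda>_. \<beta>) (\<lambda>_. \<gamma>)"
  shows "(1 / real (card V)) * (lam * Z' V E lam / Z V E lam)
            \<ge> 1 / (\<beta> + \<gamma> * real (max_degree V E))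
       \<and> real (indep_number V E) \<ge> real (card V) / (\<beta> + \<gamma> * real (max_degree V E))"
proof -
  note sg = assms(1) and lam = assms(3)
  have fV: "finite V" using sg unfolding simple_graph_def by auto
  have fI: "finite (indep_sets V E)" using fin_indep[OF fV] .
  let ?D = "\<beta> + \<gamma> * real (max_degree V E)"
  let ?n = "real (card V)"
  let ?Z = "Z V E lam" and ?W = "lam * Z' V E lam"
  have Dpos: "?D > 0" using assms(4,5) by (simp add: add_pos_nonneg)
  have npos: "?n > 0" using fV assms(2) by (simp add: card_gt_0_iff)
  have Zpos: "?Z \<ge> 1" using Z_ge1[OF fV, of lam] lam by simp
  have loc: "\<And>u. u \<in> V \<Longrightarrow> (\<Sum>I\<in>indep_sets V E. lam ^ card I * (\<beta> * (if u \<in> I then 1 else 0)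
            + \<gamma> * real (card (I \<inter> neighbourhood V E u)) - 1)) \<ge> 0"
    by (rule local_u[OF sg _ lam]) (use assms(6) in \<open>auto simp: local_occupancy_def\<close>)
  have "0 \<le> (\<Sum>u\<in>V. \<Sum>I\<in>indep_sets V E. lam ^ card I * (\<beta> * (if u \<in> I then 1 else 0)
            + \<gamma> * real (card (I \<inter> neighbourhood V E u)) - 1))"
    using loc by (rule sum_nonneg)
  also have "\<dots> = (\<Sum>I\<in>indep_sets V E. \<Sum>u\<in>V. lam ^ card I * (\<beta> * (if u \<in> I then 1 else 0)
            + \<gamma> * real (card (I \<inter> neighbourhood V E u)) - 1))" by (rule sum.swap)
  also have "\<dots> \<le> (\<Sum>I\<in>indep_sets V E. ?D * (real (card I) * lam ^ card I) - ?n * lam ^ card I)"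
  proof (rule sum_mono)
    fix I assume I: "I \<in> indep_sets V E"
    hence IV: "I \<subseteq> V" unfolding indep_sets_def by auto
    have fIs: "finite I" using IV fV by (auto intro: finite_subset)
    have s1: "(\<Sum>u\<in>V. (if u \<in> I then 1 else 0::real)) = real (card I)"
      using fV IV by (simp add: sum.If_cases Int_absorb1 Int_absorb2)
    have "(\<Sum>u\<in>V. lam ^ card I * (\<beta> * (if u \<in> I then 1 else 0)
            + \<gamma> * real (card (I \<inter> neighbourhood V E u)) - 1))
       = lam ^ card I * (\<beta> * (\<Sum>u\<in>V. (if u \<in> I then 1 else 0::real))
            + \<gamma> * (\<Sum>u\<in>V. real (card (I \<inter> neighbourhood V E u))) - ?n)"
      by (simp add: sum_distrib_left[symmetric] sum.distrib sum_subtractf algebra_simps)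
    also have "\<dots> \<le> lam ^ card I * (\<beta> * real (card I)
            + \<gamma> * (real (card I) * real (max_degree V E)) - ?n)"
      unfolding s1 using nbr_count[OF sg IV] lam assms(5)
      by (intro mult_left_mono) auto
    also have "\<dots> = ?D * (real (card I) * lam ^ card I) - ?n * lam ^ card I"
      by (simp add: algebra_simps)
    finally show "(\<Sum>u\<in>V. lam ^ card I * (\<beta> * (if u \<in> I then 1 else 0)
            + \<gamma> * real (card (I \<inter> neighbourhood V E u)) - 1))
        \<le> ?D * (real (card I) * lam ^ card I) - ?n * lam ^ card I" .
  qed
  also have "\<dots> = ?D * ?W - ?n * ?Z"
    unfolding lamZ' Z_def by (simp add: sum_subtractf sum_distrib_left)
  finally have key: "?n * ?Z \<le> ?D * ?W" by simp
  have c1: "1 / ?D \<le> (1 / ?n) * (?W / ?Z)"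
    by (rule c1aux[OF Dpos npos _ key]) (use Zpos in simp)
  have WZ: "?W \<le> real (indep_number V E) * ?Z"
  proof -
    have "?W = (\<Sum>I\<in>indep_sets V E. real (card I) * lam ^ card I)" by (rule lamZ')
    also have "\<dots> \<le> (\<Sum>I\<in>indep_sets V E. real (indep_number V E) * lam ^ card I)"
    proof (rule sum_mono)
      fix I assume "I \<in> indep_sets V E"
      hence "card I \<le> indep_number V E" unfolding indep_number_def using fI by (auto intro: Max_ge)
      thus "real (card I) * lam ^ card I \<le> real (indep_number V E) * lam ^ card I"
        using lam by (intro mult_right_mono) auto
    qed
    also have "\<dots> = real (indep_number V E) * ?Z" unfolding Z_def by (simp add: sum_distrib_left)
    finally show ?thesis .
  qed
  have c2: "?n / ?D \<le> real (indep_number V E)"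
  proof -
    have "?n / ?D = ?n * (1 / ?D)" by simp
    also have "\<dots> \<le> ?n * ((1 / ?n) * (?W / ?Z))" using c1 npos by (intro mult_left_mono) auto
    also have "\<dots> = ?W / ?Z" using npos by simp
    also have "\<dots> \<le> real (indep_number V E)" using WZ Zpos by (simp add: divide_le_eq)
    finally show ?thesis .
  qed
  show ?thesis using c1 c2 by simp
qed

end
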